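(* Let $\alpha,\beta,\gamma\in\mathbb{F}\setminus\{\frac12\}$, and let $\mathbf{A}$ be the 5-dimensional LV algebra with natural basis $e_1,\dots,e_5$ in which $e_1e_2=\alpha e_1+(1-\alpha)e_2$, $e_2e_3=\beta e_2+(1-\beta)e_3$, $e_3e_4=\gamma e_3+(1-\gamma)e_4$, and $e_ie_j=\frac12(e_i+e_j)$ for all other pairs $i,j$. Then $\mathrm{Der}(\mathbf{A})=\{0\}$.
   Context: Let $\mathbb{F}$ be a field of characteristic different from $2$. A Lotka–Volterra (LV) algebra of dimension $5$ over $\mathbb{F}$ is a commutative (not necessarily associative) $\mathbb{F}$-algebra $\mathbf{A}$ with a basis $e_1,\dots,e_5$ (the natural basis) such that $e_ie_j=\alpha_{ij}e_i+\alpha_{ji}e_j$ with $\alpha_{ij}\in\mathbb{F}$, $\alpha_{ii}=\frac12$ and $\alpha_{ij}+\alpha_{ji}=1$ for all $i,j$. A derivation is a linear map $D:\mathbf{A}\to\mathbf{A}$ with $D(uv)=D(u)v+uD(v)$ for all $u,v$; $\mathrm{Der}(\mathbf{A})$ is the set of derivations. *)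

theory Defs
  imports Main
begin

text \<open>Elements of a 5-dimensional LV algebra over a field are represented by their
coordinate functions w.r.t. the natural basis e_1,...,e_5: a vector u is a function
nat => 'a with u i = 0 for i outside {1..5}; u i is the coefficient of e_i.\<close>

definition LV_space :: "(nat \<Rightarrow> 'a::field) set" where
  "LV_space = {u. \<forall>i. i \<notin> {1..5} \<longrightarrow> u i = 0}"

definition LV_basis :: "nat \<Rightarrow> nat \<Rightarrow> 'a::field" where
  "LV_basis i = (\<lambda>k. if k = i then 1 else 0)"

text \<open>The LV multiplication determined by structure constants a, i.e.
e_i e_j = a i j e_i + a j i e_j, extended bilinearly.\<close>
definition LV_mult :: "(nat \<Rightarrow> nat \<Rightarrow> 'a::field) \<Rightarrow> (nat \<Rightarrow> 'a) \<Rightarrow> (nat \<Rightarrow> 'a) \<Rightarrow> (nat \<Rightarrow> 'a)" where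
  "LV_mult a u v = (\<lambda>k. if k \<in> {1..5} then
      (\<Sum>j\<in>{1..5}. a k j * u k * v j) + (\<Sum>i\<in>{1..5}. a k i * u i * v k) else 0)"

definition is_LV_constants :: "(nat \<Rightarrow> nat \<Rightarrow> 'a::field) \<Rightarrow> bool" where
  "is_LV_constants a \<longleftrightarrow> (\<forall>i\<in>{1..5}. \<forall>j\<in>{1..5}. a i i = 1/2 \<and> a i j + a j i = 1)"

text \<open>Derivations: linear maps of the algebra into itself satisfying the Leibniz rule.
Maps are taken extensional (zero outside the carrier) so that they are determined by
their action on the algebra.\<close>
definition LV_Der :: "(nat \<Rightarrow> nat \<Rightarrow> 'a::field) \<Rightarrow> ((nat \<Rightarrow> 'a) \<Rightarrow> (nat \<Rightarrow> 'a)) set" where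
  "LV_Der a = {D. (\<forall>u\<in>LV_space. D u \<in> LV_space)
      \<and> (\<forall>u\<in>LV_space. \<forall>v\<in>LV_space. D (\<lambda>k. u k + v k) = (\<lambda>k. D u k + D v k))
      \<and> (\<forall>c. \<forall>u\<in>LV_space. D (\<lambda>k. c * u k) = (\<lambda>k. c * D u k))
      \<and> (\<forall>u\<in>LV_space. \<forall>v\<in>LV_space. D (LV_mult a u v) = (\<lambda>k. LV_mult a (D u) v k + LV_mult a u (D v) k))
      \<and> (\<forall>u. u \<notin> LV_space \<longrightarrow> D u = (\<lambda>k. 0))}"

definition chain_consts :: "'a::field \<Rightarrow> 'a \<Rightarrow> 'a \<Rightarrow> nat \<Rightarrow> nat \<Rightarrow> 'a" where
  "chain_consts al be ga i j =
     (if (i, j) = (1, 2) then al else if (i, j) = (2, 1) then 1 - al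
      else if (i, j) = (2, 3) then be else if (i, j) = (3, 2) then 1 - be
      else if (i, j) = (3, 4) then ga else if (i, j) = (4, 3) then 1 - ga
      else 1/2)"

end

theory Submission imports Defs begin

lemma basis_in: "LV_basis i \<in> LV_space" if "i \<in> {1..5}" for i
  using that unfolding LV_space_def LV_basis_def by (force intro!: sum.neutral)

lemma scale_in: "u \<in> LV_space \<Longrightarrow> (\<lambda>k. c * u k) \<in> LV_space"
  by (auto simp: LV_space_def)

lemma add_in: "u \<in> LV_space \<Longrightarrow> v \<in> LV_space \<Longrightarrow> (\<lambda>k. u k + v k) \<in> LV_space"
  by (auto simp: LV_space_def)

lemma mult_basis:
  assumes "i \<in> {1..5}" "j \<in> {1..5}"
  shows "LV_mult a (LV_basis i) (LV_basis j) = (\<lambda>k. a i j * LV_basis i k + a j i * LV_basis j k)"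
proof
  fix k
  show "LV_mult a (LV_basis i) (LV_basis j) k = a i j * LV_basis i k + a j i * LV_basis j k"
    using assms by (auto simp: LV_mult_def LV_basis_def mult_ac if_distrib[of "\<lambda>x. x * _"] if_distrib[of "\<lambda>x. _ * x"] sum.delta sum.delta' cong: if_cong)
qed

lemma mult_left:
  assumes "j \<in> {1..5}" "k \<in> {1..5}"
  shows "LV_mult a x (LV_basis j) k = a k j * x k + (if k = j then (\<Sum>m\<in>{1..5}. a k m * x m) else 0)"
  using assms by (auto simp: LV_mult_def LV_basis_def mult_ac if_distrib[of "\<lambda>x. x * _"] if_distrib[of "\<lambda>x. _ * x"] sum.delta sum.delta' cong: if_cong)

lemma mult_right:
  assumes "i \<in> {1..5}" "k \<in> {1..5}"
  shows "LV_mult a (LV_basis i) y k = (if k = i then (\<Sum>m\<in>{1..5}. a k m * y m) else 0) + a k i * y k"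
  using assms by (auto simp: LV_mult_def LV_basis_def mult_ac if_distrib[of "\<lambda>x. x * _"] if_distrib[of "\<lambda>x. _ * x"] sum.delta sum.delta' cong: if_cong)


lemma sum5: "sum f {1..5::nat} = f 1 + f 2 + f 3 + f 4 + f 5"
  by (simp add: numeral_eq_Suc add.assoc)

lemma der_eq:
  assumes D: "D \<in> LV_Der a" and ij: "i \<in> {1..5}" "j \<in> {1..5}" and k: "k \<in> {1..5}"
  shows "a i j * D (LV_basis i) k + a j i * D (LV_basis j) k =
     a k j * D (LV_basis i) k + (if k = j then (\<Sum>m\<in>{1..5}. a k m * D (LV_basis i) m) else 0)
     + ((if k = i then (\<Sum>m\<in>{1..5}. a k m * D (LV_basis j) m) else 0) + a k i * D (LV_basis j) k)"
proof -
  have bi: "LV_basis i \<in> LV_space" "LV_basis j \<in> LV_space" using ij basis_in by auto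
  have lin: "\<forall>u\<in>LV_space. \<forall>v\<in>LV_space. D (\<lambda>k. u k + v k) = (\<lambda>k. D u k + D v k)"
    and sc: "\<forall>c. \<forall>u\<in>LV_space. D (\<lambda>k. c * u k) = (\<lambda>k. c * D u k)"
    and lei: "\<forall>u\<in>LV_space. \<forall>v\<in>LV_space. D (LV_mult a u v) = (\<lambda>k. LV_mult a (D u) v k + LV_mult a u (D v) k)"
    using D by (auto simp: LV_Der_def)
  have "D (LV_mult a (LV_basis i) (LV_basis j)) = D (\<lambda>k. (\<lambda>k. a i j * LV_basis i k) k + (\<lambda>k. a j i * LV_basis j k) k)"
    unfolding mult_basis[OF ij] by simp
  also have "\<dots> = (\<lambda>k. D (\<lambda>k. a i j * LV_basis i k) k + D (\<lambda>k. a j i * LV_basis j k) k)"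
    by (rule lin[rule_format, OF scale_in[OF bi(1)] scale_in[OF bi(2)]])
  also have "\<dots> = (\<lambda>k. a i j * D (LV_basis i) k + a j i * D (LV_basis j) k)"
    using sc[rule_format, OF bi(1)] sc[rule_format, OF bi(2)] by simp
  finally have "(\<lambda>k. a i j * D (LV_basis i) k + a j i * D (LV_basis j) k) =
      (\<lambda>k. LV_mult a (D (LV_basis i)) (LV_basis j) k + LV_mult a (LV_basis i) (D (LV_basis j)) k)"
    using lei[rule_format, OF bi] by simp
  then have "a i j * D (LV_basis i) k + a j i * D (LV_basis j) k =
      LV_mult a (D (LV_basis i)) (LV_basis j) k + LV_mult a (LV_basis i) (D (LV_basis j)) k"
    by meson
  then show ?thesis by (simp only: mult_left[OF ij(2) k] mult_right[OF ij(1) k])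
qed

lemma lin_sum:
  assumes D: "D \<in> LV_Der a" and S: "S \<subseteq> {1..5}"
  shows "D (\<lambda>k. \<Sum>i\<in>S. u i * LV_basis i k) = (\<lambda>k. \<Sum>i\<in>S. u i * D (LV_basis i) k)"
proof -
  have fin: "finite S" using S finite_subset by blast
  have lin: "\<forall>u\<in>LV_space. \<forall>v\<in>LV_space. D (\<lambda>k. u k + v k) = (\<lambda>k. D u k + D v k)"
    and sc: "\<forall>c. \<forall>u\<in>LV_space. D (\<lambda>k. c * u k) = (\<lambda>k. c * D u k)"
    using D by (auto simp: LV_Der_def)
  have mem: "(\<lambda>k. \<Sum>i\<in>T. u i * LV_basis i k) \<in> LV_space" if "T \<subseteq> {1..5}" for T
    using that unfolding LV_space_def LV_basis_def by (force intro!: sum.neutral)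
  from fin S show ?thesis
  proof (induction S rule: finite_induct)
    case empty
    have "D (\<lambda>k. 0 * LV_basis 1 k) = (\<lambda>k. 0 * D (LV_basis 1) k)"
      using sc[rule_format, where c=0 and u="LV_basis 1"] basis_in[of 1] by simp
    then show ?case by simp
  next
    case (insert x F)
    have "D (\<lambda>k. \<Sum>i\<in>insert x F. u i * LV_basis i k) =
        D (\<lambda>k. (\<lambda>k. u x * LV_basis x k) k + (\<lambda>k. \<Sum>i\<in>F. u i * LV_basis i k) k)"
      using insert by simp
    also have "\<dots> = (\<lambda>k. D (\<lambda>k. u x * LV_basis x k) k + D (\<lambda>k. \<Sum>i\<in>F. u i * LV_basis i k) k)"
      using lin[rule_format, OF scale_in[OF basis_in[of x]] mem[of F]] insert.prems by auto
    also have "\<dots> = (\<lambda>k. \<Sum>i\<in>insert x F. u i * D (LV_basis i) k)"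
      using insert sc[rule_format, OF basis_in[of x]] by simp
    finally show ?case .
  qed
qed

lemma space_decomp:
  assumes "u \<in> LV_space"
  shows "u = (\<lambda>k. \<Sum>i\<in>{1..5}. u i * LV_basis i k)"
proof
  fix k
  show "u k = (\<Sum>i\<in>{1..5}. u i * LV_basis i k)"
    using assms by (cases "k \<in> {1..5}") (auto simp: LV_space_def LV_basis_def if_distrib[of "\<lambda>x. _ * x"] sum.delta' cong: if_cong)
qed


lemma der_zero:
  fixes \<alpha> \<beta> \<gamma> :: "'a::field"
  assumes char: "(2::'a) \<noteq> 0"
    and al: "\<alpha> \<noteq> 1/2" and be: "\<beta> \<noteq> 1/2" and ga: "\<gamma> \<noteq> 1/2"
    and D: "D \<in> LV_Der (chain_consts \<alpha> \<beta> \<gamma>)"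
  shows "\<forall>i\<in>{1..5}. \<forall>k\<in>{1..5}. D (LV_basis i) k = 0"
proof -
  note E = der_eq[OF D]
  have m: "(1::nat) \<in> {1..5}" "(2::nat) \<in> {1..5}" "(3::nat) \<in> {1..5}" "(4::nat) \<in> {1..5}" "(5::nat) \<in> {1..5}" by auto
  define h where "h = (1/2::'a)"
  have half: "2 * h = 1" using char by (simp add: h_def)
  have cc: "chain_consts \<alpha> \<beta> \<gamma> i j =
     (if (i, j) = (1, 2) then \<alpha> else if (i, j) = (2, 1) then 1 - \<alpha>
      else if (i, j) = (2, 3) then \<beta> else if (i, j) = (3, 2) then 1 - \<beta>
      else if (i, j) = (3, 4) then \<gamma> else if (i, j) = (4, 3) then 1 - \<gamma>
      else h)" for i j by (simp add: chain_consts_def h_def)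
  have p: "2 * \<alpha> - 1 \<noteq> 0" using al char by (auto simp: field_simps)
  have q: "2 * \<beta> - 1 \<noteq> 0" using be char by (auto simp: field_simps)
  have r: "2 * \<gamma> - 1 \<noteq> 0" using ga char by (auto simp: field_simps)
  have "(2 * \<alpha> - 1) * D (LV_basis 1) 2 = 0"
    using E[OF m(1) m(1) m(2), simplified cc sum5, simplified prod.inject semiring_norm if_True if_False simp_thms, simplified numeral_One] half by algebra
  then have z12: "D (LV_basis 1) 2 = 0" using p by simp
  have "(2 * \<gamma> - 1) * D (LV_basis 1) 4 = 0"
    using E[OF m(1) m(3) m(4), simplified cc sum5, simplified prod.inject semiring_norm if_True if_False simp_thms, simplified numeral_One] half by algebra
  then have z14: "D (LV_basis 1) 4 = 0" using r by simp
  have "(2 * \<gamma> - 1) * D (LV_basis 1) 3 = 0"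
    using E[OF m(1) m(4) m(3), simplified cc sum5, simplified prod.inject semiring_norm if_True if_False simp_thms, simplified numeral_One] half by algebra
  then have z13: "D (LV_basis 1) 3 = 0" using r by simp
  have "(2 * \<alpha> - 1) * D (LV_basis 4) 2 = 0"
    using E[OF m(1) m(4) m(2), simplified cc sum5, simplified prod.inject semiring_norm if_True if_False simp_thms, simplified numeral_One] half by algebra
  then have z42: "D (LV_basis 4) 2 = 0" using p by simp
  have "(2 * \<alpha> - 1) * D (LV_basis 5) 2 = 0"
    using E[OF m(1) m(5) m(2), simplified cc sum5, simplified prod.inject semiring_norm if_True if_False simp_thms, simplified numeral_One] half by algebra
  then have z52: "D (LV_basis 5) 2 = 0" using p by simp
  have "(2 * \<alpha> - 1) * D (LV_basis 2) 1 = 0"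
    using E[OF m(2) m(2) m(1), simplified cc sum5, simplified prod.inject semiring_norm if_True if_False simp_thms, simplified numeral_One] half by algebra
  then have z21: "D (LV_basis 2) 1 = 0" using p by simp
  have "(2 * \<beta> - 1) * D (LV_basis 2) 3 = 0"
    using E[OF m(2) m(2) m(3), simplified cc sum5, simplified prod.inject semiring_norm if_True if_False simp_thms, simplified numeral_One] half by algebra
  then have z23: "D (LV_basis 2) 3 = 0" using q by simp
  have "(2 * \<alpha> - 1) * D (LV_basis 4) 1 = 0"
    using E[OF m(2) m(4) m(1), simplified cc sum5, simplified prod.inject semiring_norm if_True if_False simp_thms, simplified numeral_One] half by algebra
  then have z41: "D (LV_basis 4) 1 = 0" using p by simp
  have "(2 * \<alpha> - 1) * D (LV_basis 5) 1 = 0"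
    using E[OF m(2) m(5) m(1), simplified cc sum5, simplified prod.inject semiring_norm if_True if_False simp_thms, simplified numeral_One] half by algebra
  then have z51: "D (LV_basis 5) 1 = 0" using p by simp
  have "(2 * \<beta> - 1) * D (LV_basis 5) 3 = 0"
    using E[OF m(2) m(5) m(3), simplified cc sum5, simplified prod.inject semiring_norm if_True if_False simp_thms, simplified numeral_One] half by algebra
  then have z53: "D (LV_basis 5) 3 = 0" using q by simp
  have "(2 * \<beta> - 1) * D (LV_basis 3) 2 = 0"
    using E[OF m(3) m(3) m(2), simplified cc sum5, simplified prod.inject semiring_norm if_True if_False simp_thms, simplified numeral_One] half by algebra
  then have z32: "D (LV_basis 3) 2 = 0" using q by simp
  have "(2 * \<gamma> - 1) * D (LV_basis 3) 4 = 0"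
    using E[OF m(3) m(3) m(4), simplified cc sum5, simplified prod.inject semiring_norm if_True if_False simp_thms, simplified numeral_One] half by algebra
  then have z34: "D (LV_basis 3) 4 = 0" using r by simp
  have "(2 * \<gamma> - 1) * D (LV_basis 5) 4 = 0"
    using E[OF m(3) m(5) m(4), simplified cc sum5, simplified prod.inject semiring_norm if_True if_False simp_thms, simplified numeral_One] half by algebra
  then have z54: "D (LV_basis 5) 4 = 0" using r by simp
  have "(2 * \<gamma> - 1) * D (LV_basis 4) 3 = 0"
    using E[OF m(4) m(4) m(3), simplified cc sum5, simplified prod.inject semiring_norm if_True if_False simp_thms, simplified numeral_One] half by algebra
  then have z43: "D (LV_basis 4) 3 = 0" using r by simp
  have "(2 * \<alpha> - 1) * D (LV_basis 2) 4 = 0"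
    using E[OF m(1) m(2) m(4), simplified cc sum5, simplified prod.inject semiring_norm if_True if_False simp_thms, simplified numeral_One] half z14 by algebra
  then have z24: "D (LV_basis 2) 4 = 0" using p by simp
  have "(2 * \<gamma> - 1) * D (LV_basis 3) 1 = 0"
    using E[OF m(3) m(4) m(1), simplified cc sum5, simplified prod.inject semiring_norm if_True if_False simp_thms, simplified numeral_One] half z41 by algebra
  then have z31: "D (LV_basis 3) 1 = 0" using r by simp
  have "(2 * \<alpha> - 1) * (D (LV_basis 1) 5 - D (LV_basis 2) 5) = 0"
    using E[OF m(1) m(2) m(5), simplified cc sum5, simplified prod.inject semiring_norm if_True if_False simp_thms, simplified numeral_One] half by algebra
  then have y1: "D (LV_basis 1) 5 = D (LV_basis 2) 5" using p by simp
  have "(2 * \<beta> - 1) * (D (LV_basis 2) 5 - D (LV_basis 3) 5) = 0"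
    using E[OF m(2) m(3) m(5), simplified cc sum5, simplified prod.inject semiring_norm if_True if_False simp_thms, simplified numeral_One] half by algebra
  then have y2: "D (LV_basis 2) 5 = D (LV_basis 3) 5" using q by simp
  have "(2 * \<gamma> - 1) * (D (LV_basis 3) 5 - D (LV_basis 4) 5) = 0"
    using E[OF m(3) m(4) m(5), simplified cc sum5, simplified prod.inject semiring_norm if_True if_False simp_thms, simplified numeral_One] half by algebra
  then have y3: "D (LV_basis 3) 5 = D (LV_basis 4) 5" using r by simp
  have y4: "D (LV_basis 1) 1 + D (LV_basis 1) 5 = 0"
    using E[OF m(1) m(5) m(5), simplified cc sum5, simplified prod.inject semiring_norm if_True if_False simp_thms, simplified numeral_One] half z12 z13 z14 by algebra
  have "(2 * \<alpha> - 1) * D (LV_basis 1) 5 = 0"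
    using E[OF m(1) m(2) m(2), simplified cc sum5, simplified prod.inject semiring_norm if_True if_False simp_thms, simplified numeral_One] half y4 z12 z13 z14 by algebra
  then have z15: "D (LV_basis 1) 5 = 0" using p by simp
  have z11: "D (LV_basis 1) 1 = 0" using y4 z15 by simp
  have z25: "D (LV_basis 2) 5 = 0" using y1 z15 by simp
  have z35: "D (LV_basis 3) 5 = 0" using y2 z25 by simp
  have z45: "D (LV_basis 4) 5 = 0" using y3 z35 by simp
  have z22: "D (LV_basis 2) 2 = 0"
    using E[OF m(2) m(5) m(5), simplified cc sum5, simplified prod.inject semiring_norm if_True if_False simp_thms, simplified numeral_One] half z21 z23 z24 z25 by algebra
  have z33: "D (LV_basis 3) 3 = 0"
    using E[OF m(3) m(5) m(5), simplified cc sum5, simplified prod.inject semiring_norm if_True if_False simp_thms, simplified numeral_One] half z31 z32 z34 z35 by algebra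
  have z44: "D (LV_basis 4) 4 = 0"
    using E[OF m(4) m(5) m(5), simplified cc sum5, simplified prod.inject semiring_norm if_True if_False simp_thms, simplified numeral_One] half z41 z42 z43 z45 by algebra
  have z55: "D (LV_basis 5) 5 = 0"
    using E[OF m(5) m(5) m(5), simplified cc sum5, simplified prod.inject semiring_norm if_True if_False simp_thms, simplified numeral_One] half z51 z52 z53 z54 by algebra
  have I: "{1..5::nat} = {1,2,3,4,5}" by auto
  show ?thesis unfolding I using z11 z12 z13 z14 z15 z21 z22 z23 z24 z25 z31 z32 z33 z34 z35 z41 z42 z43 z44 z45 z51 z52 z53 z54 z55 by simp
qed

theorem mainTheorem13:
  fixes \<alpha> \<beta> \<gamma> :: "'a::field"
  assumes char: "(2::'a) \<noteq> 0"
    and "\<alpha> \<noteq> 1/2" and "\<beta> \<noteq> 1/2" and "\<gamma> \<noteq> 1/2"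
  shows "LV_Der (chain_consts \<alpha> \<beta> \<gamma>) = {(\<lambda>u. (\<lambda>k. 0))}"
proof (intro equalityI subsetI)
  fix D assume D: "D \<in> LV_Der (chain_consts \<alpha> \<beta> \<gamma>)"
  have z: "\<forall>i\<in>{1..5}. \<forall>k\<in>{1..5}. D (LV_basis i) k = 0"
    using der_zero[OF assms D] .
  have sp: "\<forall>i\<in>{1..5}. D (LV_basis i) \<in> LV_space"
    using D basis_in unfolding LV_Der_def by blast
  have zi: "D (LV_basis i) = (\<lambda>k. 0)" if "i \<in> {1..5}" for i
  proof
    fix k show "D (LV_basis i) k = 0"
      using z sp that by (cases "k \<in> {1..5}") (auto simp: LV_space_def)
  qed
  have "D u = (\<lambda>k. 0)" for u
  proof (cases "u \<in> LV_space")
    case True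
    have "D u = D (\<lambda>k. \<Sum>i\<in>{1..5}. u i * LV_basis i k)"
      using space_decomp[OF True] by simp
    also have "\<dots> = (\<lambda>k. \<Sum>i\<in>{1..5}. u i * D (LV_basis i) k)"
      using lin_sum[OF D] by simp
    also have "\<dots> = (\<lambda>k. 0)" using zi by simp
    finally show ?thesis .
  next
    case False then show ?thesis using D unfolding LV_Der_def by blast
  qed
  then show "D \<in> {(\<lambda>u. (\<lambda>k. 0))}" by auto
next
  fix D :: "(nat \<Rightarrow> 'a) \<Rightarrow> nat \<Rightarrow> 'a"
  assume "D \<in> {(\<lambda>u. (\<lambda>k. 0))}"
  then have D: "D = (\<lambda>u. (\<lambda>k. 0))" by simp
  show "D \<in> LV_Der (chain_consts \<alpha> \<beta> \<gamma>)"
    unfolding D LV_Der_def by (auto simp: LV_space_def LV_mult_def)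
qed

end
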